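(* Let $\alpha_2\in\mathbb{C}$ and let $u(t)$ be a solution of the fourth-order equation $$\frac{d^4u}{dt^4}=10u\left(\frac{du}{dt}\right)^2+10u^2\frac{d^2u}{dt^2}-6u^5+tu+\alpha_2 .$$ Define $$q_1=u,\quad p_1=\frac{d^3u}{dt^3}+\left(\frac{du}{dt}\right)^2-\frac t2+\left(3u^3-6u\frac{du}{dt}-2\frac{d^2u}{dt^2}\right)u,\quad q_2=\frac{d^2u}{dt^2}-2u\frac{du}{dt},\quad p_2=\frac{du}{dt}-u^2 .$$ Then the map $(u,u',u'',u''')\mapsto(q_1,p_1,q_2,p_2)$ is birational, and $(q_1,p_1,q_2,p_2)$ satisfies the Hamiltonian system $$\frac{dq_1}{dt}=\frac{\partial H}{\partial p_1}=q_1^2+p_2,\quad \frac{dp_1}{dt}=-\frac{\partial H}{\partial q_1}=-2q_1p_1+\alpha_2-\frac12,\quad \frac{dq_2}{dt}=\frac{\partial H}{\partial p_2}=-3p_2^2+p_1+\frac t2,\quad \frac{dp_2}{dt}=-\frac{\partial H}{\partial q_2}=q_2$$ with the polynomial Hamiltonian $$H=q_1^2p_1+\left(\frac12-\alpha_2\right)q_1-p_2^3+\frac t2p_2-\frac{q_2^2}{2}+p_1p_2 .$$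
   Context: This fourth-order equation is the second member $P_{II}^{(2)}$ of the second Painlevé hierarchy. Primes denote $d/dt$. *)

theory Defs
  imports Complex_Main
begin

inductive polyfun :: "((nat \<Rightarrow> complex) \<Rightarrow> complex) \<Rightarrow> bool" where
  pf_const: "polyfun (\<lambda>v. c)"
| pf_var: "polyfun (\<lambda>v. v i)"
| pf_add: "polyfun f \<Longrightarrow> polyfun g \<Longrightarrow> polyfun (\<lambda>v. f v + g v)"
| pf_mult: "polyfun f \<Longrightarrow> polyfun g \<Longrightarrow> polyfun (\<lambda>v. f v * g v)"

type_synonym pt4 = "complex \<times> complex \<times> complex \<times> complex"

text \<open>Variable assignment: variable 0 is the independent variable t (the
  coefficients of the maps are allowed to be rational in t), variables 1..4 are
  the coordinates of the point of C^4.\<close>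
definition env :: "complex \<Rightarrow> pt4 \<Rightarrow> nat \<Rightarrow> complex" where
  "env t x = (case x of (a, b, c, d) \<Rightarrow>
      (\<lambda>i. if i < 5 then [t, a, b, c, d] ! i else 0))"

definition rat_map_rep ::
  "(nat \<Rightarrow> (nat \<Rightarrow> complex) \<Rightarrow> complex) \<Rightarrow> (nat \<Rightarrow> (nat \<Rightarrow> complex) \<Rightarrow> complex)
    \<Rightarrow> (complex \<Rightarrow> pt4 \<Rightarrow> pt4) \<Rightarrow> bool" where
  "rat_map_rep N D F \<longleftrightarrow>
     (\<forall>k<4. polyfun (N k) \<and> polyfun (D k) \<and> (\<exists>t x. D k (env t x) \<noteq> 0)) \<and>
     (\<forall>t x. (\<forall>k<4. D k (env t x) \<noteq> 0) \<longrightarrow>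
        F t x = (N 0 (env t x) / D 0 (env t x), N 1 (env t x) / D 1 (env t x),
                 N 2 (env t x) / D 2 (env t x), N 3 (env t x) / D 3 (env t x)))"

definition rdom ::
  "(nat \<Rightarrow> (nat \<Rightarrow> complex) \<Rightarrow> complex) \<Rightarrow> (complex \<times> pt4) set" where
  "rdom D = {(t, x). \<forall>k<4. D k (env t x) \<noteq> 0}"

definition birational :: "(complex \<Rightarrow> pt4 \<Rightarrow> pt4) \<Rightarrow> bool" where
  "birational F \<longleftrightarrow> (\<exists>N D N' D' G.
     rat_map_rep N D F \<and> rat_map_rep N' D' G \<and>
     (\<forall>t x. (t, x) \<in> rdom D \<and> (t, F t x) \<in> rdom D' \<longrightarrow> G t (F t x) = x) \<and>
     (\<forall>t y. (t, y) \<in> rdom D' \<and> (t, G t y) \<in> rdom D \<longrightarrow> F t (G t y) = y))"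

definition phi_q1 :: "complex \<Rightarrow> complex \<Rightarrow> complex \<Rightarrow> complex \<Rightarrow> complex \<Rightarrow> complex" where
  "phi_q1 t u u1 u2 u3 = u"
definition phi_p1 :: "complex \<Rightarrow> complex \<Rightarrow> complex \<Rightarrow> complex \<Rightarrow> complex \<Rightarrow> complex" where
  "phi_p1 t u u1 u2 u3 = u3 + u1^2 - t/2 + (3*u^3 - 6*u*u1 - 2*u2) * u"
definition phi_q2 :: "complex \<Rightarrow> complex \<Rightarrow> complex \<Rightarrow> complex \<Rightarrow> complex \<Rightarrow> complex" where
  "phi_q2 t u u1 u2 u3 = u2 - 2*u*u1"
definition phi_p2 :: "complex \<Rightarrow> complex \<Rightarrow> complex \<Rightarrow> complex \<Rightarrow> complex \<Rightarrow> complex" where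
  "phi_p2 t u u1 u2 u3 = u1 - u^2"

definition Phi :: "complex \<Rightarrow> pt4 \<Rightarrow> pt4" where
  "Phi t x = (case x of (u, u1, u2, u3) \<Rightarrow>
     (phi_q1 t u u1 u2 u3, phi_p1 t u u1 u2 u3, phi_q2 t u u1 u2 u3, phi_p2 t u u1 u2 u3))"

definition Ham :: "complex \<Rightarrow> complex \<Rightarrow> complex \<Rightarrow> complex \<Rightarrow> complex \<Rightarrow> complex \<Rightarrow> complex" where
  "Ham \<alpha>2 t q1 p1 q2 p2 = q1^2 * p1 + (1/2 - \<alpha>2) * q1 - p2^3 + t/2 * p2 - q2^2/2 + p1 * p2"

end

theory Submission
  imports Defs
begin

definition NF :: "nat \<Rightarrow> (nat \<Rightarrow> complex) \<Rightarrow> complex" where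
  "NF k = [\<lambda>v. v 1,
           \<lambda>v. v 4 + v 2 * v 2 + (-1/2) * v 0 + (3 * (v 1 * v 1 * v 1) + (-6) * (v 1 * v 2) + (-2) * v 3) * v 1,
           \<lambda>v. v 3 + (-2) * (v 1 * v 2),
           \<lambda>v. v 2 + (-1) * (v 1 * v 1)] ! k"

definition NG :: "nat \<Rightarrow> (nat \<Rightarrow> complex) \<Rightarrow> complex" where
  "NG k = [\<lambda>v. v 1,
           \<lambda>v. v 4 + v 1 * v 1,
           \<lambda>v. v 3 + 2 * v 1 * (v 4 + v 1 * v 1),
           \<lambda>v. v 2 + (-1) * ((v 4 + v 1 * v 1) * (v 4 + v 1 * v 1)) + (1/2) * v 0
               + (-1) * ((3 * (v 1 * v 1 * v 1) + (-6) * (v 1 * (v 4 + v 1 * v 1))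
                    + (-2) * (v 3 + 2 * v 1 * (v 4 + v 1 * v 1))) * v 1)] ! k"

definition Ginv :: "complex \<Rightarrow> pt4 \<Rightarrow> pt4" where
  "Ginv t y = (NG 0 (env t y), NG 1 (env t y), NG 2 (env t y), NG 3 (env t y))"

lemma pf_sub: "polyfun f \<Longrightarrow> polyfun g \<Longrightarrow> polyfun (\<lambda>v. f v - g v)"
proof -
  assume a: "polyfun f" "polyfun g"
  have "polyfun (\<lambda>v. f v + (-1) * g v)" by (intro polyfun.intros a)
  thus ?thesis by simp
qed

lemma pf_div: "polyfun f \<Longrightarrow> polyfun (\<lambda>v. f v / c)"
proof -
  assume a: "polyfun f"
  have "polyfun (\<lambda>v. f v * (1/c))" by (intro polyfun.intros a)
  thus ?thesis by simp
qed

lemma k4: "(k::nat) < 4 \<Longrightarrow> k = 0 \<or> k = 1 \<or> k = 2 \<or> k = 3" by auto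

lemma polyNF: "k < 4 \<Longrightarrow> polyfun (NF k)"
  by (drule k4) (auto simp: NF_def intro!: polyfun.intros pf_sub pf_div)

lemma polyNG: "k < 4 \<Longrightarrow> polyfun (NG k)"
  by (drule k4) (auto simp: NG_def intro!: polyfun.intros pf_sub pf_div)

lemma polyone: "polyfun (\<lambda>v. 1)" by (rule polyfun.intros)

lemma birat: "birational Phi"
  unfolding birational_def
proof (intro exI conjI)
  show "rat_map_rep NF (\<lambda>k v. 1) Phi"
    unfolding rat_map_rep_def
    apply (intro conjI)
     apply (auto simp: polyNF polyone)[1]
    by (auto simp: Phi_def NF_def env_def phi_q1_def phi_p1_def phi_q2_def phi_p2_def
       power2_eq_square power3_eq_cube algebra_simps split: prod.splits)
  show "rat_map_rep NG (\<lambda>k v. 1) Ginv"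
    unfolding rat_map_rep_def
    apply (intro conjI)
     apply (auto simp: polyNG polyone)[1]
    by (auto simp: Ginv_def)
  show "\<forall>t x. (t, x) \<in> rdom (\<lambda>k v. 1) \<and> (t, Phi t x) \<in> rdom (\<lambda>k v. 1) \<longrightarrow> Ginv t (Phi t x) = x"
    by (auto simp: Ginv_def NG_def Phi_def env_def phi_q1_def phi_p1_def phi_q2_def phi_p2_def
       power2_eq_square power3_eq_cube algebra_simps split: prod.splits)
  show "\<forall>t y. (t, y) \<in> rdom (\<lambda>k v. 1) \<and> (t, Ginv t y) \<in> rdom (\<lambda>k v. 1) \<longrightarrow> Phi t (Ginv t y) = y"
    by (auto simp: Ginv_def NG_def Phi_def env_def phi_q1_def phi_p1_def phi_q2_def phi_p2_def
       power2_eq_square power3_eq_cube algebra_simps split: prod.splits)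
qed

theorem theorem2p1:
  fixes \<alpha>2 :: complex and S :: "complex set"
    and u u1 u2 u3 u4 :: "complex \<Rightarrow> complex"
  assumes S_open: "open S"
    and d1: "\<And>t. t \<in> S \<Longrightarrow> (u has_field_derivative u1 t) (at t)"
    and d2: "\<And>t. t \<in> S \<Longrightarrow> (u1 has_field_derivative u2 t) (at t)"
    and d3: "\<And>t. t \<in> S \<Longrightarrow> (u2 has_field_derivative u3 t) (at t)"
    and d4: "\<And>t. t \<in> S \<Longrightarrow> (u3 has_field_derivative u4 t) (at t)"
    and ode: "\<And>t. t \<in> S \<Longrightarrow>
       u4 t = 10 * u t * (u1 t)^2 + 10 * (u t)^2 * u2 t - 6 * (u t)^5 + t * u t + \<alpha>2"
  shows "birational Phi
    \<and> (\<forall>t q1 p1 q2 p2.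
          ((\<lambda>x. Ham \<alpha>2 t q1 x q2 p2) has_field_derivative (q1^2 + p2)) (at p1)
        \<and> ((\<lambda>x. Ham \<alpha>2 t x p1 q2 p2) has_field_derivative (2*q1*p1 - \<alpha>2 + 1/2)) (at q1)
        \<and> ((\<lambda>x. Ham \<alpha>2 t q1 p1 q2 x) has_field_derivative (-3*p2^2 + p1 + t/2)) (at p2)
        \<and> ((\<lambda>x. Ham \<alpha>2 t q1 p1 x p2) has_field_derivative (-q2)) (at q2))
    \<and> (\<forall>t\<in>S.
        let q1 = phi_q1 t (u t) (u1 t) (u2 t) (u3 t);
            p1 = phi_p1 t (u t) (u1 t) (u2 t) (u3 t);
            q2 = phi_q2 t (u t) (u1 t) (u2 t) (u3 t);
            p2 = phi_p2 t (u t) (u1 t) (u2 t) (u3 t)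
        in ((\<lambda>s. phi_q1 s (u s) (u1 s) (u2 s) (u3 s)) has_field_derivative (q1^2 + p2)) (at t)
         \<and> ((\<lambda>s. phi_p1 s (u s) (u1 s) (u2 s) (u3 s)) has_field_derivative
               (-2*q1*p1 + \<alpha>2 - 1/2)) (at t)
         \<and> ((\<lambda>s. phi_q2 s (u s) (u1 s) (u2 s) (u3 s)) has_field_derivative
               (-3*p2^2 + p1 + t/2)) (at t)
         \<and> ((\<lambda>s. phi_p2 s (u s) (u1 s) (u2 s) (u3 s)) has_field_derivative q2) (at t))"
proof -
  have H: "\<forall>t q1 p1 q2 p2.
          ((\<lambda>x. Ham \<alpha>2 t q1 x q2 p2) has_field_derivative (q1^2 + p2)) (at p1)
        \<and> ((\<lambda>x. Ham \<alpha>2 t x p1 q2 p2) has_field_derivative (2*q1*p1 - \<alpha>2 + 1/2)) (at q1)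
        \<and> ((\<lambda>x. Ham \<alpha>2 t q1 p1 q2 x) has_field_derivative (-3*p2^2 + p1 + t/2)) (at p2)
        \<and> ((\<lambda>x. Ham \<alpha>2 t q1 p1 x p2) has_field_derivative (-q2)) (at q2)"
    unfolding Ham_def
    by (auto intro!: derivative_eq_intros simp: algebra_simps power2_eq_square)
  have D: "\<forall>t\<in>S.
        let q1 = phi_q1 t (u t) (u1 t) (u2 t) (u3 t);
            p1 = phi_p1 t (u t) (u1 t) (u2 t) (u3 t);
            q2 = phi_q2 t (u t) (u1 t) (u2 t) (u3 t);
            p2 = phi_p2 t (u t) (u1 t) (u2 t) (u3 t)
        in ((\<lambda>s. phi_q1 s (u s) (u1 s) (u2 s) (u3 s)) has_field_derivative (q1^2 + p2)) (at t)
         \<and> ((\<lambda>s. phi_p1 s (u s) (u1 s) (u2 s) (u3 s)) has_field_derivative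
               (-2*q1*p1 + \<alpha>2 - 1/2)) (at t)
         \<and> ((\<lambda>s. phi_q2 s (u s) (u1 s) (u2 s) (u3 s)) has_field_derivative
               (-3*p2^2 + p1 + t/2)) (at t)
         \<and> ((\<lambda>s. phi_p2 s (u s) (u1 s) (u2 s) (u3 s)) has_field_derivative q2) (at t)"
  proof
    fix t assume t: "t \<in> S"
    note e1 = d1[OF t] and e2 = d2[OF t] and e3 = d3[OF t] and e4 = d4[OF t]
    note o = ode[OF t]
    have A: "((\<lambda>s. u s) has_field_derivative (u t)^2 + (u1 t - (u t)^2)) (at t)"
      using e1 by simp
    have B: "((\<lambda>s. u3 s + (u1 s)^2 - s/2 + (3*(u s)^3 - 6*u s*u1 s - 2*u2 s) * u s) has_field_derivative
       (-2 * u t * (u3 t + (u1 t)^2 - t/2 + (3*(u t)^3 - 6*u t*u1 t - 2*u2 t) * u t) + \<alpha>2 - 1/2)) (at t)"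
      by (auto intro!: derivative_eq_intros e1 e2 e3 e4 simp: o power2_eq_square power3_eq_cube eval_nat_numeral algebra_simps)
    have C: "((\<lambda>s. u2 s - 2 * u s * u1 s) has_field_derivative
       (-3*(u1 t - (u t)^2)^2 + (u3 t + (u1 t)^2 - t/2 + (3*(u t)^3 - 6*u t*u1 t - 2*u2 t) * u t) + t/2)) (at t)"
      by (auto intro!: derivative_eq_intros e1 e2 e3 e4 simp: power2_eq_square power3_eq_cube algebra_simps)
    have E: "((\<lambda>s. u1 s - (u s)^2) has_field_derivative (u2 t - 2 * u t * u1 t)) (at t)"
      by (auto intro!: derivative_eq_intros e1 e2 e3 e4 simp: power2_eq_square algebra_simps)
    show "let q1 = phi_q1 t (u t) (u1 t) (u2 t) (u3 t);
            p1 = phi_p1 t (u t) (u1 t) (u2 t) (u3 t);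
            q2 = phi_q2 t (u t) (u1 t) (u2 t) (u3 t);
            p2 = phi_p2 t (u t) (u1 t) (u2 t) (u3 t)
        in ((\<lambda>s. phi_q1 s (u s) (u1 s) (u2 s) (u3 s)) has_field_derivative (q1^2 + p2)) (at t)
         \<and> ((\<lambda>s. phi_p1 s (u s) (u1 s) (u2 s) (u3 s)) has_field_derivative
               (-2*q1*p1 + \<alpha>2 - 1/2)) (at t)
         \<and> ((\<lambda>s. phi_q2 s (u s) (u1 s) (u2 s) (u3 s)) has_field_derivative
               (-3*p2^2 + p1 + t/2)) (at t)
         \<and> ((\<lambda>s. phi_p2 s (u s) (u1 s) (u2 s) (u3 s)) has_field_derivative q2) (at t)"
      unfolding Let_def phi_q1_def phi_p1_def phi_q2_def phi_p2_def
      using A B C E by simp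
  qed
  show ?thesis using birat H D by blast
qed

end
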